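(* Let $X$ be an infinite dimensional real Banach space, and let $\psi$ be one of the cardinal functions $s$, $hL$, $hd$. Then $\psi(X^* )=\psi(B_{X^*})$, where $X^*$ and the closed dual unit ball $B_{X^*}$ carry the weak$^*$ topology.
   Context: For a topological space $Z$: $s(Z)=\sup\{|D|: D\subseteq Z \text{ is discrete in its subspace topology}\}$ (spread); $hd(Z)=\sup\{d(Y):Y\subseteq Z\}$ where $d(Y)$ is the least cardinality of a dense subset of $Y$ (hereditary density); $hL(Z)=\sup\{L(Y):Y\subseteq Z\}$ where $L(Y)$ is the least cardinal $\kappa$ such that every open cover of $Y$ has a subcover of cardinality at most $\kappa$ (hereditary Lindelöf degree). The weak$^*$ topology on $X^*$ is generated by the sets $\{x^*: x^*(x)\in I\}$, $x\in X$, $I\subseteq\mathbb R$ an open interval. *)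

theory Defs
  imports "HOL-Analysis.Analysis"
begin

definition infinite_dimensional :: "'a::real_vector itself \<Rightarrow> bool" where
  "infinite_dimensional _ \<longleftrightarrow> \<not> (\<exists>S::'a set. finite S \<and> span S = UNIV)"

definition weak_star_topology :: "('a::real_normed_vector \<Rightarrow>\<^sub>L real) topology" where
  "weak_star_topology = topology_generated_by
     {{f. blinfun_apply f x \<in> {a<..<b}} | x a b. True}"

definition dual_ball :: "('a::real_normed_vector \<Rightarrow>\<^sub>L real) set" where
  "dual_ball = {f. norm f \<le> 1}"

definition discrete_in :: "'x topology \<Rightarrow> 'x set \<Rightarrow> bool" where
  "discrete_in T D \<longleftrightarrow> D \<subseteq> topspace T \<and>
     (\<forall>x\<in>D. openin (subtopology T D) {x})"

text \<open>Cardinal-function bounds: psi(T) \<le> |K| for a cardinal given as |K|.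
  psi(T) is a supremum, so psi(T) \<le> kappa iff every member of the family is \<le> kappa.\<close>

definition spread_le :: "'x topology \<Rightarrow> 'b set \<Rightarrow> bool" where
  "spread_le T K \<longleftrightarrow> (\<forall>D. discrete_in T D \<longrightarrow> (card_of D, card_of K) \<in> ordLeq)"

definition density_le :: "'x topology \<Rightarrow> 'b set \<Rightarrow> bool" where
  "density_le T K \<longleftrightarrow> (\<exists>D. D \<subseteq> topspace T \<and> T closure_of D = topspace T
       \<and> (card_of D, card_of K) \<in> ordLeq)"

definition hd_le :: "'x topology \<Rightarrow> 'b set \<Rightarrow> bool" where
  "hd_le T K \<longleftrightarrow> (\<forall>Y. Y \<subseteq> topspace T \<longrightarrow> density_le (subtopology T Y) K)"

definition lindelof_le :: "'x topology \<Rightarrow> 'b set \<Rightarrow> bool" where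
  "lindelof_le T K \<longleftrightarrow> (\<forall>\<U>. (\<forall>U\<in>\<U>. openin T U) \<and> topspace T \<subseteq> \<Union>\<U> \<longrightarrow>
       (\<exists>\<V>. \<V> \<subseteq> \<U> \<and> topspace T \<subseteq> \<Union>\<V> \<and> (card_of \<V>, card_of K) \<in> ordLeq))"

definition hL_le :: "'x topology \<Rightarrow> 'b set \<Rightarrow> bool" where
  "hL_le T K \<longleftrightarrow> (\<forall>Y. Y \<subseteq> topspace T \<longrightarrow> lindelof_le (subtopology T Y) K)"

end

theory Submission
  imports Defs
begin


definition good :: "('a::real_normed_vector \<times> real) set \<Rightarrow> bool" where
 "good G \<longleftrightarrow> (\<forall>x y y'. (x,y)\<in>G \<longrightarrow> (x,y')\<in>G \<longrightarrow> y = y') \<and> (0,0)\<in>G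
   \<and> (\<forall>x y x' y'. (x,y)\<in>G \<longrightarrow> (x',y')\<in>G \<longrightarrow> (x+x',y+y')\<in>G)
   \<and> (\<forall>c x y. (x,y)\<in>G \<longrightarrow> (c *\<^sub>R x, c*y)\<in>G) \<and> (\<forall>x y. (x,y)\<in>G \<longrightarrow> y \<le> norm x)"

lemma good_extend:
  fixes G :: "('a::real_normed_vector \<times> real) set"
  assumes gG: "good G" and zS: "z \<notin> fst ` G"
  shows "\<exists>G'. good G' \<and> G \<subseteq> G' \<and> G' \<noteq> G"
proof -
  define S where "S = fst ` G"
  define g where "g x = (THE y. (x,y)\<in>G)" for x
  have funG: "(x,y)\<in>G \<Longrightarrow> (x,y')\<in>G \<Longrightarrow> y = y'" for x y y' using gG unfolding good_def by blast
  have gI: "(x,y)\<in>G \<Longrightarrow> g x = y" for x y unfolding g_def using funG by blast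
  have gS: "x \<in> S \<Longrightarrow> (x, g x) \<in> G" for x unfolding S_def using gI by force
  have G0: "(0,0)\<in>G" using gG unfolding good_def by blast
  have g0: "g 0 = 0" using gI[OF G0] .
  have S0: "0 \<in> S" using G0 unfolding S_def by force
  have addG: "(x,y)\<in>G \<Longrightarrow> (x',y')\<in>G \<Longrightarrow> (x+x',y+y')\<in>G" for x y x' y' using gG unfolding good_def by blast
  have scG: "(x,y)\<in>G \<Longrightarrow> (c *\<^sub>R x, c*y)\<in>G" for c x y using gG unfolding good_def by blast
  have domG: "(x,y)\<in>G \<Longrightarrow> y \<le> norm x" for x y using gG unfolding good_def by blast
  have Sadd: "x\<in>S \<Longrightarrow> x'\<in>S \<Longrightarrow> x+x' \<in> S \<and> g (x+x') = g x + g x'" for x x'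
    using addG[OF gS gS] gI unfolding S_def by force
  have Ssc: "x\<in>S \<Longrightarrow> c *\<^sub>R x \<in> S \<and> g (c *\<^sub>R x) = c * g x" for x c
    using scG[OF gS] gI unfolding S_def by force
  have gle: "x\<in>S \<Longrightarrow> g x \<le> norm x" for x using domG[OF gS] .
  have key: "g y1 - norm (y1 - z) \<le> norm (y2 + z) - g y2" if "y1\<in>S" "y2\<in>S" for y1 y2
  proof -
    have "g y1 + g y2 = g (y1 + y2)" using Sadd that by simp
    also have "\<dots> \<le> norm (y1 + y2)" using gle Sadd that by blast
    also have "\<dots> \<le> norm (y1 - z) + norm (y2 + z)"
      using norm_triangle_ineq[of "y1 - z" "y2 + z"] by simp
    finally show ?thesis by simp
  qed
  define A where "A = {g y - norm (y - z) | y. y \<in> S}"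
  define c where "c = Sup A"
  have Ane: "A \<noteq> {}" using S0 unfolding A_def by blast
  have Abdd: "bdd_above A" unfolding A_def bdd_above_def using key[OF _ S0] by auto
  have c_ge: "g y - norm (y - z) \<le> c" if "y\<in>S" for y
    unfolding c_def by (rule cSup_upper[OF _ Abdd]) (use that A_def in blast)
  have c_le: "c \<le> norm (w + z) - g w" if "w\<in>S" for w
    unfolding c_def by (rule cSup_least[OF Ane]) (use key that A_def in blast)
  define G' where "G' = {(y + t *\<^sub>R z, g y + t * c) | y t. y \<in> S}"
  have uniq: "t = t' \<and> y = y'" if "y\<in>S" "y'\<in>S" "y + t *\<^sub>R z = y' + t' *\<^sub>R z" for y y' t t'
  proof (cases "t = t'")
    case True then show ?thesis using that by simp
  next
    case False
    have eq: "(t - t') *\<^sub>R z = y' + (-1) *\<^sub>R y" using that by (simp add: algebra_simps)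
    have "z = (1/(t-t')) *\<^sub>R ((t - t') *\<^sub>R z)" using False by simp
    also have "\<dots> = (1/(t-t')) *\<^sub>R (y' + (-1) *\<^sub>R y)" using eq by simp
    finally have "z = (1/(t-t')) *\<^sub>R (y' + (-1) *\<^sub>R y)" .
    moreover have "y' + (-1) *\<^sub>R y \<in> S" using Sadd Ssc that by blast
    ultimately have "z \<in> S" using Ssc by simp
    then show ?thesis using zS S_def by blast
  qed
  have good': "good G'"
    unfolding good_def
  proof (intro conjI allI impI)
    fix x y y' assume "(x,y)\<in>G'" "(x,y')\<in>G'"
    then show "y = y'" unfolding G'_def using uniq by auto
  next
    show "(0,0)\<in>G'" unfolding G'_def using S0 g0 by (auto intro!: exI[of _ 0])
  next
    fix x y x' y' assume "(x,y)\<in>G'" "(x',y')\<in>G'"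
    then obtain u t u' t' where "u\<in>S" "u'\<in>S" "x = u + t *\<^sub>R z" "y = g u + t*c"
      "x' = u' + t' *\<^sub>R z" "y' = g u' + t'*c" unfolding G'_def by blast
    then show "(x+x',y+y')\<in>G'" unfolding G'_def using Sadd
      by (auto simp: algebra_simps intro!: exI[of _ "u+u'"] exI[of _ "t+t'"])
  next
    fix a x y assume "(x,y)\<in>G'"
    then obtain u t where "u\<in>S" "x = u + t *\<^sub>R z" "y = g u + t*c" unfolding G'_def by blast
    then show "(a *\<^sub>R x, a*y)\<in>G'" unfolding G'_def using Ssc
      by (auto simp: algebra_simps intro!: exI[of _ "a *\<^sub>R u"] exI[of _ "a*t"])
  next
    fix x y assume "(x,y)\<in>G'"
    then obtain u t where uS: "u\<in>S" and xe: "x = u + t *\<^sub>R z" and ye: "y = g u + t*c" unfolding G'_def by blast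
    show "y \<le> norm x"
    proof (cases "t > 0")
      case True
      define w where "w = (1/t) *\<^sub>R u"
      have wS: "w \<in> S" "g w = g u / t" using Ssc[OF uS] unfolding w_def by auto
      have "c \<le> norm (w + z) - g u / t" using c_le[OF wS(1)] wS(2) by simp
      then have "t * c \<le> t * norm (w + z) - g u" using True by (simp add: field_simps)
      moreover have "t * norm (w + z) = norm (u + t *\<^sub>R z)"
      proof -
        have "u + t *\<^sub>R z = t *\<^sub>R (w + z)" using True by (simp add: w_def scaleR_add_right)
        then show ?thesis using True by simp
      qed
      ultimately show ?thesis using xe ye by simp
    next
      case False
      show ?thesis
      proof (cases "t = 0")
        case True then show ?thesis using xe ye gle uS by simp
      next
        case False2: False
        define s where "s = - t"
        have s: "s > 0" using False False2 s_def by simp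
        define w where "w = (1/s) *\<^sub>R u"
        have wS: "w \<in> S" "g w = g u / s" using Ssc[OF uS] unfolding w_def by auto
        have "g u / s - norm (w - z) \<le> c" using c_ge[OF wS(1)] wS(2) by simp
        then have "g u - s * norm (w - z) \<le> s * c" using s by (simp add: field_simps)
        moreover have "s * norm (w - z) = norm (u - s *\<^sub>R z)"
        proof -
          have "u - s *\<^sub>R z = s *\<^sub>R (w - z)" using s by (simp add: w_def scaleR_diff_right)
          then show ?thesis using s by simp
        qed
        ultimately show ?thesis using xe ye s_def by simp
      qed
    qed
  qed
  have sub: "G \<subseteq> G'"
  proof
    fix p assume "p \<in> G"
    then obtain x y where p: "p = (x,y)" "(x,y)\<in>G" by (cases p) auto
    then have "x \<in> S" "g x = y" using gI S_def by force+
    then have "(x + 0 *\<^sub>R z, g x + 0 * c) \<in> G'" unfolding G'_def by blast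
    then show "p \<in> G'" using p \<open>g x = y\<close> by simp
  qed
  have "(0 + 1 *\<^sub>R z, g 0 + 1 * c) \<in> G'" unfolding G'_def using S0 by blast
  then have "(z, c) \<in> G'" using g0 by simp
  then have "G' \<noteq> G" using zS by force
  then show ?thesis using good' sub by blast
qed

lemma goodD:
  assumes "good G"
  shows "(x,y)\<in>G \<Longrightarrow> (x,y')\<in>G \<Longrightarrow> y = y'" "(0,0)\<in>G"
    "(x,y)\<in>G \<Longrightarrow> (x',y')\<in>G \<Longrightarrow> (x+x',y+y')\<in>G"
    "(x,y)\<in>G \<Longrightarrow> (c *\<^sub>R x, c*y)\<in>G" "(x,y)\<in>G \<Longrightarrow> y \<le> norm x"
  using assms unfolding good_def by blast+

lemma good_Union:
  assumes ne: "C \<noteq> {}" and gd: "\<forall>G\<in>C. good G" and ch: "\<forall>G1\<in>C. \<forall>G2\<in>C. G1 \<subseteq> G2 \<or> G2 \<subseteq> G1"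
  shows "good (\<Union>C)"
proof -
  have two: "\<exists>G\<in>C. p \<in> G \<and> q \<in> G" if pq: "p \<in> \<Union>C" "q \<in> \<Union>C" for p q
  proof -
    from pq(1) obtain G1 where G1: "G1\<in>C" "p\<in>G1" by (rule UnionE)
    from pq(2) obtain G2 where G2: "G2\<in>C" "q\<in>G2" by (rule UnionE)
    have "G1 \<subseteq> G2 \<or> G2 \<subseteq> G1" using ch G1(1) G2(1) by simp
    then show ?thesis
    proof
      assume "G1 \<subseteq> G2" then show ?thesis using G1 G2 by auto
    next
      assume "G2 \<subseteq> G1" then show ?thesis using G1 G2 by auto
    qed
  qed
  show ?thesis unfolding good_def
  proof (intro conjI allI impI)
    fix x y y' assume "(x,y)\<in>\<Union>C" "(x,y')\<in>\<Union>C"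
    then obtain G where "G\<in>C" "(x,y)\<in>G" "(x,y')\<in>G" using two by blast
    then show "y = y'" using gd by (metis goodD(1))
  next
    obtain G where "G \<in> C" using ne by blast
    then have "good G" using gd by blast
    then have "(0,0) \<in> G" by (rule goodD(2))
    then show "(0,0) \<in> \<Union>C" using \<open>G\<in>C\<close> by blast
  next
    fix x y x' y' assume "(x,y)\<in>\<Union>C" "(x',y')\<in>\<Union>C"
    then obtain G where "G\<in>C" "(x,y)\<in>G" "(x',y')\<in>G" using two by blast
    then have "(x+x',y+y') \<in> G" using gd goodD(3) by blast
    then show "(x+x',y+y') \<in> \<Union>C" using \<open>G\<in>C\<close> by blast
  next
    fix c x y assume "(x,y)\<in>\<Union>C"
    then obtain G where "G\<in>C" "(x,y)\<in>G" by blast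
    then have "(c *\<^sub>R x, c*y) \<in> G" using gd goodD(4) by blast
    then show "(c *\<^sub>R x, c*y) \<in> \<Union>C" using \<open>G\<in>C\<close> by blast
  next
    fix x y assume "(x,y)\<in>\<Union>C"
    then obtain G where "G\<in>C" "(x,y)\<in>G" by blast
    then show "y \<le> norm x" using gd goodD(5) by blast
  qed
qed

lemma exists_functional:
  fixes x0 :: "'a::real_normed_vector"
  assumes x0: "x0 \<noteq> 0"
  shows "\<exists>f::'a \<Rightarrow>\<^sub>L real. norm f \<le> 1 \<and> blinfun_apply f x0 = norm x0"
proof -
  define G0 where "G0 = {(t *\<^sub>R x0, t * norm x0) | t. True}"
  have gG0: "good G0" unfolding good_def G0_def
  proof (intro conjI allI impI)
    fix x y y' assume "(x, y) \<in> {(t *\<^sub>R x0, t * norm x0) |t. True}" "(x, y') \<in> {(t *\<^sub>R x0, t * norm x0) |t. True}"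
    then obtain t t' where tt: "x = t *\<^sub>R x0" "y = t * norm x0" "x = t' *\<^sub>R x0" "y' = t' * norm x0" by blast
    from tt(1) tt(3) have "t *\<^sub>R x0 = t' *\<^sub>R x0" by metis
    then have "t = t'" using x0 by auto
    then show "y = y'" using \<open>y = t * norm x0\<close> \<open>y' = t' * norm x0\<close> by simp
  next
    show "(0, 0) \<in> {(t *\<^sub>R x0, t * norm x0) |t. True}" by (rule CollectI, rule exI[of _ 0]) simp
  next
    fix x y x' y' assume "(x, y) \<in> {(t *\<^sub>R x0, t * norm x0) |t. True}" "(x', y') \<in> {(t *\<^sub>R x0, t * norm x0) |t. True}"
    then obtain t t' where "x = t *\<^sub>R x0" "y = t * norm x0" "x' = t' *\<^sub>R x0" "y' = t' * norm x0" by blast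
    then show "(x + x', y + y') \<in> {(t *\<^sub>R x0, t * norm x0) |t. True}"
      by (intro CollectI exI[of _ "t+t'"]) (simp add: algebra_simps)
  next
    fix c x y assume "(x, y) \<in> {(t *\<^sub>R x0, t * norm x0) |t. True}"
    then obtain t where "x = t *\<^sub>R x0" "y = t * norm x0" by blast
    then show "(c *\<^sub>R x, c * y) \<in> {(t *\<^sub>R x0, t * norm x0) |t. True}"
      by (intro CollectI exI[of _ "c*t"]) (simp add: algebra_simps)
  next
    fix x y assume "(x, y) \<in> {(t *\<^sub>R x0, t * norm x0) |t. True}"
    then obtain t where "x = t *\<^sub>R x0" "y = t * norm x0" by blast
    moreover have "t * norm x0 \<le> \<bar>t\<bar> * norm x0" by (rule mult_right_mono) auto
    ultimately show "y \<le> norm x" by simp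
  qed
  define A where "A = {G. good G \<and> G0 \<subseteq> G}"
  have "\<exists>M\<in>A. \<forall>X\<in>A. M \<subseteq> X \<longrightarrow> X = M"
  proof (rule Zorn_Lemma2, intro ballI)
    fix C assume C: "C \<in> chains A"
    show "\<exists>U\<in>A. \<forall>X\<in>C. X \<subseteq> U"
    proof (cases "C = {}")
      case True then show ?thesis using gG0 A_def by auto
    next
      case False
      have CA: "C \<subseteq> A" using chainsD2[OF C] .
      have "good (\<Union>C)"
      proof (rule good_Union[OF False])
        show "\<forall>G\<in>C. good G" using CA A_def by blast
        show "\<forall>G1\<in>C. \<forall>G2\<in>C. G1 \<subseteq> G2 \<or> G2 \<subseteq> G1" using chainsD[OF C] by blast
      qed
      moreover have "G0 \<subseteq> \<Union>C" using False CA A_def by blast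
      ultimately show ?thesis unfolding A_def by blast
    qed
  qed
  then obtain M where MA: "M \<in> A" and Mmax: "\<forall>X\<in>A. M \<subseteq> X \<longrightarrow> X = M" by blast
  have gM: "good M" and G0M: "G0 \<subseteq> M" using MA A_def by auto
  have dom: "x \<in> fst ` M" for x
  proof (rule ccontr)
    assume "x \<notin> fst ` M"
    then obtain G' where "good G'" "M \<subseteq> G'" "G' \<noteq> M" using good_extend[OF gM] by blast
    then show False using Mmax G0M A_def by blast
  qed
  define f where "f x = (THE y. (x,y)\<in>M)" for x
  have fI: "(x,y)\<in>M \<Longrightarrow> f x = y" for x y unfolding f_def using goodD(1)[OF gM] by blast
  have fM: "(x, f x) \<in> M" for x using dom[of x] fI by force
  have addM: "(x,y)\<in>M \<Longrightarrow> (x',y')\<in>M \<Longrightarrow> (x+x',y+y')\<in>M" for x y x' y' using goodD[OF gM] by blast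
  have scM: "(x,y)\<in>M \<Longrightarrow> (c *\<^sub>R x, c*y)\<in>M" for c x y using goodD[OF gM] by blast
  have domM: "(x,y)\<in>M \<Longrightarrow> y \<le> norm x" for x y using goodD[OF gM] by blast
  have fadd: "f (x + x') = f x + f x'" for x x' by (rule fI, rule addM, rule fM, rule fM)
  have fsc: "f (c *\<^sub>R x) = c * f x" for c x by (rule fI, rule scM, rule fM)
  have fle: "f x \<le> norm x" for x by (rule domM, rule fM)
  have fabs: "norm (f x) \<le> 1 * norm x" for x
  proof -
    have "- f x = f ((-1) *\<^sub>R x)" using fsc[of "-1" x] by simp
    also have "\<dots> \<le> norm x" using fle[of "(-1) *\<^sub>R x"] by (simp del: scaleR_minus1_left)
    finally show ?thesis using fle[of x] by simp
  qed
  have lin: "linear f" by (rule linearI) (use fadd fsc in auto)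
  have bl: "bounded_linear f" using lin fabs by (intro bounded_linear_intro[of f 1]) (use fadd fsc fabs in auto)
  have "norm (Blinfun f) \<le> 1" by (rule norm_blinfun_bound) (use fabs bounded_linear_Blinfun_apply[OF bl] in auto)
  moreover have "blinfun_apply (Blinfun f) x0 = norm x0"
  proof -
    have "(1 *\<^sub>R x0, 1 * norm x0) \<in> M" using G0M G0_def by blast
    then show ?thesis using fI bounded_linear_Blinfun_apply[OF bl] by simp
  qed
  ultimately show ?thesis by blast
qed



lemma sub_sub_eq: "D \<subseteq> B \<Longrightarrow> subtopology (subtopology T B) D = subtopology T D"
  by (simp add: subtopology_subtopology Int_absorb1)

lemma mono_spread: "spread_le T K \<Longrightarrow> spread_le (subtopology T B) K"
  unfolding spread_le_def discrete_in_def
proof (intro allI impI)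
  fix D assume H: "\<forall>D. D \<subseteq> topspace T \<and> (\<forall>x\<in>D. openin (subtopology T D) {x}) \<longrightarrow> (card_of D, card_of K) \<in> ordLeq"
    and D: "D \<subseteq> topspace (subtopology T B) \<and> (\<forall>x\<in>D. openin (subtopology (subtopology T B) D) {x})"
  have DB: "D \<subseteq> B" "D \<subseteq> topspace T" using D by auto
  then show "(card_of D, card_of K) \<in> ordLeq" using H D sub_sub_eq[OF DB(1)] by auto
qed

lemma mono_hd: "hd_le T K \<Longrightarrow> hd_le (subtopology T B) K"
  unfolding hd_le_def
proof (intro allI impI)
  fix Y assume H: "\<forall>Y. Y \<subseteq> topspace T \<longrightarrow> density_le (subtopology T Y) K"
    and Y: "Y \<subseteq> topspace (subtopology T B)"
  have "Y \<subseteq> B" "Y \<subseteq> topspace T" using Y by auto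
  then show "density_le (subtopology (subtopology T B) Y) K" using H sub_sub_eq by metis
qed

lemma mono_hL: "hL_le T K \<Longrightarrow> hL_le (subtopology T B) K"
  unfolding hL_le_def
proof (intro allI impI)
  fix Y assume H: "\<forall>Y. Y \<subseteq> topspace T \<longrightarrow> lindelof_le (subtopology T Y) K"
    and Y: "Y \<subseteq> topspace (subtopology T B)"
  have "Y \<subseteq> B" "Y \<subseteq> topspace T" using Y by auto
  then show "lindelof_le (subtopology (subtopology T B) Y) K" using H sub_sub_eq by metis
qed

lemma finite_fail:
  assumes D: "discrete_in S D" and inf: "infinite D" and fin: "finite K"
  shows "\<not> spread_le S K" "\<not> hd_le S K" "\<not> hL_le S K"
proof -
  have DS: "D \<subseteq> topspace S" and iso: "\<And>x. x\<in>D \<Longrightarrow> openin (subtopology S D) {x}"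
    using D unfolding discrete_in_def by auto
  have tD: "topspace (subtopology S D) = D" using DS by auto
  show "\<not> spread_le S K"
  proof
    assume "spread_le S K"
    then have "(card_of D, card_of K) \<in> ordLeq" using D unfolding spread_le_def by blast
    then show False using card_of_ordLeq_finite fin inf by blast
  qed
  show "\<not> hd_le S K"
  proof
    assume "hd_le S K"
    then have "density_le (subtopology S D) K" using DS unfolding hd_le_def by blast
    then obtain E where E: "E \<subseteq> D" "(subtopology S D) closure_of E = D" "(card_of E, card_of K) \<in> ordLeq"
      unfolding density_le_def tD by blast
    have "D \<subseteq> E"
    proof
      fix x assume "x \<in> D"
      then have "x \<in> (subtopology S D) closure_of E" using E by simp
      then have "\<exists>y. y \<in> E \<and> y \<in> {x}" using iso[OF \<open>x\<in>D\<close>] unfolding in_closure_of by blast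
      then show "x \<in> E" by simp
    qed
    then have "finite D" using E card_of_ordLeq_finite fin finite_subset by blast
    then show False using inf by simp
  qed
  show "\<not> hL_le S K"
  proof
    assume "hL_le S K"
    then have L: "lindelof_le (subtopology S D) K" using DS unfolding hL_le_def by blast
    have "\<forall>U\<in>(\<lambda>x. {x}) ` D. openin (subtopology S D) U" using iso by blast
    moreover have "topspace (subtopology S D) \<subseteq> \<Union>((\<lambda>x. {x}) ` D)" using tD by auto
    ultimately have "\<exists>\<V>. \<V> \<subseteq> (\<lambda>x. {x}) ` D \<and> topspace (subtopology S D) \<subseteq> \<Union>\<V> \<and> (card_of \<V>, card_of K) \<in> ordLeq"
      using L unfolding lindelof_le_def by (intro mp[OF spec[OF L[unfolded lindelof_le_def]]]) blast
    then obtain V where V: "V \<subseteq> (\<lambda>x. {x}) ` D" "D \<subseteq> \<Union>V" "(card_of V, card_of K) \<in> ordLeq"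
      unfolding tD by blast
    have "finite V" using V(3) card_of_ordLeq_finite fin by blast
    moreover have "\<forall>v\<in>V. finite v" using V(1) by auto
    ultimately have "finite (\<Union>V)" by blast
    then show False using V(2) inf finite_subset by blast
  qed
qed

definition QL :: "'x topology \<Rightarrow> 'b set \<Rightarrow> bool" where
  "QL S K \<longleftrightarrow> (\<forall>\<U>. (\<forall>U\<in>\<U>. openin S U) \<longrightarrow> (\<exists>\<V>. \<V> \<subseteq> \<U> \<and> \<Union>\<V> = \<Union>\<U> \<and> (card_of \<V>, card_of K) \<in> ordLeq))"

lemma hL_QL: "hL_le S K \<longleftrightarrow> QL S K"
proof
  assume H: "hL_le S K"
  show "QL S K" unfolding QL_def
  proof (intro allI impI)
    fix \<U> assume op: "\<forall>U\<in>\<U>. openin S U"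
    define Y where "Y = \<Union>\<U>"
    have YS: "Y \<subseteq> topspace S" using op openin_subset Y_def by blast
    then have L: "lindelof_le (subtopology S Y) K" using H unfolding hL_le_def by blast
    have "\<forall>U\<in>\<U>. openin (subtopology S Y) U"
    proof
      fix U assume "U \<in> \<U>"
      then have "openin S U" "U = U \<inter> Y" using op Y_def by auto
      then show "openin (subtopology S Y) U" unfolding openin_subtopology by blast
    qed
    moreover have "topspace (subtopology S Y) \<subseteq> \<Union>\<U>" using Y_def by auto
    ultimately obtain \<V> where "\<V> \<subseteq> \<U>" "topspace (subtopology S Y) \<subseteq> \<Union>\<V>" "(card_of \<V>, card_of K) \<in> ordLeq"
      using mp[OF spec[OF L[unfolded lindelof_le_def]], of \<U>] by blast
    moreover then have "\<Union>\<V> = \<Union>\<U>"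
    proof -
      have "topspace (subtopology S Y) = Y" using YS by auto
      then show ?thesis using calculation Y_def by blast
    qed
    ultimately show "\<exists>\<V>. \<V> \<subseteq> \<U> \<and> \<Union>\<V> = \<Union>\<U> \<and> (card_of \<V>, card_of K) \<in> ordLeq" by blast
  qed
next
  assume Q: "QL S K"
  show "hL_le S K" unfolding hL_le_def lindelof_le_def
  proof (intro allI impI)
    fix Y \<U> assume YS: "Y \<subseteq> topspace S"
      and U: "(\<forall>U\<in>\<U>. openin (subtopology S Y) U) \<and> topspace (subtopology S Y) \<subseteq> \<Union>\<U>"
    define W where "W U = (SOME V. openin S V \<and> U = V \<inter> Y)" for U
    have W: "openin S (W U) \<and> U = W U \<inter> Y" if "U \<in> \<U>" for U
    proof -
      have "\<exists>V. openin S V \<and> U = V \<inter> Y" using U that openin_subtopology by blast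
      then show ?thesis unfolding W_def by (rule someI_ex)
    qed
    have "\<forall>V\<in>W ` \<U>. openin S V" using W by blast
    then obtain \<V>' where V': "\<V>' \<subseteq> W ` \<U>" "\<Union>\<V>' = \<Union>(W ` \<U>)" "(card_of \<V>', card_of K) \<in> ordLeq"
      using mp[OF spec[OF Q[unfolded QL_def]], of "W ` \<U>"] by blast
    define \<V> where "\<V> = inv_into \<U> W ` \<V>'"
    have "\<V> \<subseteq> \<U>" unfolding \<V>_def using V'(1) by (auto intro: inv_into_into)
    moreover have "(card_of \<V>, card_of K) \<in> ordLeq" unfolding \<V>_def using V'(3) card_of_image ordLeq_transitive by blast
    moreover have "topspace (subtopology S Y) \<subseteq> \<Union>\<V>"
    proof
      fix y assume y: "y \<in> topspace (subtopology S Y)"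
      then have yY: "y \<in> Y" by simp
      obtain U where "U \<in> \<U>" "y \<in> U" using U y by blast
      then have "y \<in> W U" using W by blast
      then obtain V where V: "V \<in> \<V>'" "y \<in> V" using V'(2) \<open>U\<in>\<U>\<close> by blast
      define U' where "U' = inv_into \<U> W V"
      have VW: "V \<in> W ` \<U>" using V V'(1) by blast
      have "U' \<in> \<U>" "W U' = V" unfolding U'_def using inv_into_into[OF VW] f_inv_into_f[OF VW] by auto
      then have "y \<in> U'" using W[of U'] V yY by auto
      moreover have "U' \<in> \<V>" unfolding \<V>_def U'_def using V by blast
      ultimately show "y \<in> \<Union>\<V>" by blast
    qed
    ultimately show "\<exists>\<V>. \<V> \<subseteq> \<U> \<and> topspace (subtopology S Y) \<subseteq> \<Union>\<V> \<and> (card_of \<V>, card_of K) \<in> ordLeq" by blast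
  qed
qed

lemma union_nat_le:
  assumes inf: "infinite K" and A: "\<And>n::nat. (card_of (A n), card_of K) \<in> ordLeq"
  shows "(card_of (\<Union>n. A n), card_of K) \<in> ordLeq"
proof -
  have "(card_of (UNIV::nat set), card_of K) \<in> ordLeq" using inf infinite_iff_card_of_nat by blast
  then show ?thesis using card_of_UNION_ordLeq_infinite[OF inf, of UNIV A] A by blast
qed

lemma red_spread:
  fixes T :: "'x topology" and h :: "nat \<Rightarrow> 'x \<Rightarrow> 'x"
  assumes top: "topspace T = UNIV" and hopen: "\<And>n U. openin T U \<Longrightarrow> openin T (h n -` U)"
    and hinj: "\<And>n. inj (h n)" and cov: "\<And>x. \<exists>n. \<exists>b\<in>B. x = h n b" and inf: "infinite K"
    and sp: "spread_le (subtopology T B) K"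
  shows "spread_le T K"
  unfolding spread_le_def
proof (intro allI impI)
  fix D assume D: "discrete_in T D"
  define Dn where "Dn n = {b\<in>B. h n b \<in> D}" for n
  have Dn: "(card_of (Dn n), card_of K) \<in> ordLeq" for n
  proof -
    have "discrete_in (subtopology T B) (Dn n)" unfolding discrete_in_def
    proof (intro conjI ballI)
      show "Dn n \<subseteq> topspace (subtopology T B)" using top Dn_def by auto
    next
      fix b assume b: "b \<in> Dn n"
      have hb: "h n b \<in> D" using b Dn_def by auto
      then have "openin (subtopology T D) {h n b}" using D unfolding discrete_in_def by blast
      then obtain U where U: "openin T U" "{h n b} = U \<inter> D" unfolding openin_subtopology by blast
      have "{b} = h n -` U \<inter> Dn n"
      proof
        show "{b} \<subseteq> h n -` U \<inter> Dn n" using b U(2) by auto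
        show "h n -` U \<inter> Dn n \<subseteq> {b}"
        proof
          fix c assume c: "c \<in> h n -` U \<inter> Dn n"
          then have "h n c \<in> U \<inter> D" using Dn_def by auto
          then have "h n c = h n b" using U(2) by auto
          then show "c \<in> {b}" using hinj[of n] by (simp add: inj_eq)
        qed
      qed
      then have "openin (subtopology T (Dn n)) {b}" using hopen[OF U(1)] unfolding openin_subtopology by blast
      moreover have "Dn n \<subseteq> B" using Dn_def by auto
      ultimately show "openin (subtopology (subtopology T B) (Dn n)) {b}" using sub_sub_eq by metis
    qed
    then show ?thesis using sp unfolding spread_le_def by blast
  qed
  have "D \<subseteq> (\<Union>n. h n ` Dn n)"
  proof
    fix x assume "x \<in> D"
    obtain n b where "b \<in> B" "x = h n b" using cov by blast
    then show "x \<in> (\<Union>n. h n ` Dn n)" using \<open>x\<in>D\<close> Dn_def by blast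
  qed
  moreover have "(card_of (\<Union>n. h n ` Dn n), card_of K) \<in> ordLeq"
    by (rule union_nat_le[OF inf]) (use Dn card_of_image ordLeq_transitive in blast)
  ultimately show "(card_of D, card_of K) \<in> ordLeq" using card_of_mono1 ordLeq_transitive by blast
qed

lemma red_hd:
  fixes T :: "'x topology" and h :: "nat \<Rightarrow> 'x \<Rightarrow> 'x"
  assumes top: "topspace T = UNIV" and hopen: "\<And>n U. openin T U \<Longrightarrow> openin T (h n -` U)"
    and cov: "\<And>x. \<exists>n. \<exists>b\<in>B. x = h n b" and inf: "infinite K"
    and hd: "hd_le (subtopology T B) K"
  shows "hd_le T K"
  unfolding hd_le_def
proof (intro allI impI)
  fix Y :: "'x set"
  define Yn where "Yn n = {b\<in>B. h n b \<in> Y}" for n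
  have ex: "\<exists>E. E \<subseteq> Yn n \<and> (subtopology T (Yn n)) closure_of E = Yn n \<and> (card_of E, card_of K) \<in> ordLeq" for n
  proof -
    have "Yn n \<subseteq> topspace (subtopology T B)" using top Yn_def by auto
    then have "density_le (subtopology (subtopology T B) (Yn n)) K" using hd unfolding hd_le_def by blast
    moreover have "Yn n \<subseteq> B" using Yn_def by auto
    ultimately have "density_le (subtopology T (Yn n)) K" using sub_sub_eq[of "Yn n" B T] by simp
    then obtain D where D: "D \<subseteq> topspace (subtopology T (Yn n))"
      "(subtopology T (Yn n)) closure_of D = topspace (subtopology T (Yn n))" "(card_of D, card_of K) \<in> ordLeq"
      unfolding density_le_def by blast
    have tY: "topspace (subtopology T (Yn n)) = Yn n" using top by simp
    show ?thesis by (rule exI[of _ D]) (use D tY in simp)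
  qed
  define E where "E n = (SOME E. E \<subseteq> Yn n \<and> (subtopology T (Yn n)) closure_of E = Yn n \<and> (card_of E, card_of K) \<in> ordLeq)" for n
  have E0: "E n \<subseteq> Yn n \<and> (subtopology T (Yn n)) closure_of (E n) = Yn n \<and> (card_of (E n), card_of K) \<in> ordLeq" for n
    unfolding E_def by (rule someI_ex[OF ex])
  have E: "\<And>n. E n \<subseteq> Yn n" "\<And>n. (subtopology T (Yn n)) closure_of (E n) = Yn n"
    "\<And>n. (card_of (E n), card_of K) \<in> ordLeq" using E0 by (simp_all only:)
  define E' where "E' = (\<Union>n. h n ` E n)"
  have E'Y: "E' \<subseteq> Y" using E(1) Yn_def E'_def by auto
  have "Y \<subseteq> T closure_of E'"
  proof
    fix y assume "y \<in> Y"
    obtain n b where b: "b \<in> B" "y = h n b" using cov by blast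
    then have "b \<in> Yn n" using \<open>y\<in>Y\<close> Yn_def by auto
    then have "b \<in> T closure_of (E n)" using E(2)[of n] closure_of_subtopology_subset[of T "Yn n" "E n"] by blast
    then have bcl: "b \<in> T closure_of (E n)" .
    have "h n b \<in> T closure_of (h n ` E n)" unfolding in_closure_of
    proof (intro conjI allI impI)
      show "h n b \<in> topspace T" using top by simp
      fix U assume U: "h n b \<in> U \<and> openin T U"
      then have "b \<in> h n -` U" "openin T (h n -` U)" using hopen by auto
      then obtain z where "z \<in> E n" "z \<in> h n -` U" using bcl unfolding in_closure_of by blast
      then show "\<exists>y. y \<in> h n ` E n \<and> y \<in> U" by blast
    qed
    moreover have "T closure_of (h n ` E n) \<subseteq> T closure_of E'"
      by (rule closure_of_mono) (auto simp: E'_def)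
    ultimately show "y \<in> T closure_of E'" using b by blast
  qed
  moreover have "Y \<inter> E' = E'" using E'Y by blast
  ultimately have cl: "(subtopology T Y) closure_of E' = topspace (subtopology T Y)"
    using top by (simp add: closure_of_subtopology, blast)
  moreover have "(card_of E', card_of K) \<in> ordLeq" unfolding E'_def
    by (rule union_nat_le[OF inf]) (use E(3) card_of_image ordLeq_transitive in blast)
  then show "density_le (subtopology T Y) K" unfolding density_le_def
    by (intro exI[of _ E']) (use E'Y top cl in simp)
qed

lemma red_hL:
  fixes T :: "'x topology" and h :: "nat \<Rightarrow> 'x \<Rightarrow> 'x"
  assumes top: "topspace T = UNIV" and hopen: "\<And>n U. openin T U \<Longrightarrow> openin T (h n -` U)"
    and cov: "\<And>x. \<exists>n. \<exists>b\<in>B. x = h n b" and inf: "infinite K"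
    and hL: "hL_le (subtopology T B) K"
  shows "hL_le T K"
  unfolding hL_QL QL_def
proof (intro allI impI)
  fix \<U> assume op: "\<forall>U\<in>\<U>. openin T U"
  have Q: "QL (subtopology T B) K" using hL hL_QL by blast
  define g where "g n U = h n -` U \<inter> B" for n U
  have ex: "\<exists>\<V>'. \<V>' \<subseteq> g n ` \<U> \<and> \<Union>\<V>' = \<Union>(g n ` \<U>) \<and> (card_of \<V>', card_of K) \<in> ordLeq" for n
  proof -
    have "\<forall>V\<in>g n ` \<U>. openin (subtopology T B) V"
    proof
      fix V assume "V \<in> g n ` \<U>"
      then obtain U where "U \<in> \<U>" "V = g n U" by blast
      then show "openin (subtopology T B) V" using openin_subtopology_Int[OF hopen] op g_def by simp
    qed
    then show ?thesis using mp[OF spec[OF Q[unfolded QL_def]], of "g n ` \<U>"] by blast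
  qed
  define V' where "V' n = (SOME \<V>'. \<V>' \<subseteq> g n ` \<U> \<and> \<Union>\<V>' = \<Union>(g n ` \<U>) \<and> (card_of \<V>', card_of K) \<in> ordLeq)" for n
  have V0: "V' n \<subseteq> g n ` \<U> \<and> \<Union>(V' n) = \<Union>(g n ` \<U>) \<and> (card_of (V' n), card_of K) \<in> ordLeq" for n
    unfolding V'_def by (rule someI_ex[OF ex])
  have V': "\<And>n. V' n \<subseteq> g n ` \<U>" "\<And>n. \<Union>(V' n) = \<Union>(g n ` \<U>)"
    "\<And>n. (card_of (V' n), card_of K) \<in> ordLeq" using V0 by (simp_all only:)
  define \<V> where "\<V> = (\<Union>n. inv_into \<U> (g n) ` V' n)"
  have sub: "\<V> \<subseteq> \<U>" unfolding \<V>_def using V'(1) by (auto intro: inv_into_into)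
  moreover have "(card_of \<V>, card_of K) \<in> ordLeq" unfolding \<V>_def
    by (rule union_nat_le[OF inf]) (use V'(3) card_of_image ordLeq_transitive in blast)
  moreover have "\<Union>\<V> = \<Union>\<U>"
  proof
    show "\<Union>\<V> \<subseteq> \<Union>\<U>" using sub by blast
    show "\<Union>\<U> \<subseteq> \<Union>\<V>"
    proof
      fix x assume "x \<in> \<Union>\<U>"
      then obtain U where U: "U \<in> \<U>" "x \<in> U" by blast
      obtain n b where b: "b \<in> B" "x = h n b" using cov by blast
      then have "b \<in> g n U" using U g_def by auto
      then obtain V where V: "V \<in> V' n" "b \<in> V" using V'(2)[of n] U(1) by blast
      have VW: "V \<in> g n ` \<U>" using V V'(1) by blast
      define U' where "U' = inv_into \<U> (g n) V"
      have "U' \<in> \<U>" "g n U' = V" unfolding U'_def using inv_into_into[OF VW] f_inv_into_f[OF VW] by auto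
      then have "x \<in> U'" using V b g_def by auto
      moreover have "U' \<in> \<V>" unfolding \<V>_def U'_def using V by blast
      ultimately show "x \<in> \<Union>\<V>" by blast
    qed
  qed
  ultimately show "\<exists>\<V>. \<V> \<subseteq> \<U> \<and> \<Union>\<V> = \<Union>\<U> \<and> (card_of \<V>, card_of K) \<in> ordLeq" by blast
qed



lemma frac_cmp:
  fixes v a b p q :: real
  assumes "0 < v" "0 < a" "0 < b"
  shows "p * v / a < q * v / b \<longleftrightarrow> p * b < q * a"
proof -
  have "p * v / a < q * v / b \<longleftrightarrow> (p * v) * b < (q * v) * a"
    using assms by (simp add: divide_less_eq less_divide_eq field_simps)
  also have "\<dots> \<longleftrightarrow> v * (p * b) < v * (q * a)" by (simp add: ac_simps)
  also have "\<dots> \<longleftrightarrow> p * b < q * a" using assms by simp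
  finally show ?thesis .
qed

lemma ws_top: "topspace (weak_star_topology :: ('a::real_normed_vector \<Rightarrow>\<^sub>L real) topology) = UNIV"
proof -
  have "f \<in> {g. blinfun_apply g 0 \<in> {-1<..<1}}" for f :: "'a \<Rightarrow>\<^sub>L real" by simp
  then show ?thesis unfolding weak_star_topology_def topology_generated_by_topspace by blast
qed

lemma ws_basic: "openin (weak_star_topology :: ('a::real_normed_vector \<Rightarrow>\<^sub>L real) topology) {f. blinfun_apply f x \<in> {a<..<b}}"
  unfolding weak_star_topology_def by (rule topology_generated_by_Basis) blast

lemma ws_scale_open:
  assumes "openin (weak_star_topology :: ('a::real_normed_vector \<Rightarrow>\<^sub>L real) topology) U"
  shows "openin (weak_star_topology :: ('a \<Rightarrow>\<^sub>L real) topology) ((\<lambda>f. c *\<^sub>R f) -` U)"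
proof -
  have "continuous_map (weak_star_topology :: ('a \<Rightarrow>\<^sub>L real) topology) weak_star_topology (\<lambda>f. c *\<^sub>R f)"
    unfolding weak_star_topology_def
  proof (rule continuous_on_generated_topo)
    fix V assume "V \<in> {{f::'a \<Rightarrow>\<^sub>L real. blinfun_apply f x \<in> {a<..<b}} | x a b. True}"
    then obtain x a b where V: "V = {f::'a \<Rightarrow>\<^sub>L real. blinfun_apply f x \<in> {a<..<b}}" by blast
    have "(\<lambda>f. c *\<^sub>R f) -` V = {f::'a \<Rightarrow>\<^sub>L real. blinfun_apply f (c *\<^sub>R x) \<in> {a<..<b}}"
      unfolding V by (auto simp: blinfun.scaleR_right scaleR_blinfun.rep_eq)
    then show "openin (topology_generated_by {{f::'a \<Rightarrow>\<^sub>L real. blinfun_apply f x \<in> {a<..<b}} | x a b. True})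
      ((\<lambda>f. c *\<^sub>R f) -` V \<inter> topspace (topology_generated_by {{f::'a \<Rightarrow>\<^sub>L real. blinfun_apply f x \<in> {a<..<b}} | x a b. True}))"
      using ws_top[where 'a='a] ws_basic[where 'a='a] unfolding weak_star_topology_def by simp
  next
    show "(\<lambda>f. c *\<^sub>R f) ` topspace (topology_generated_by {{f::'a \<Rightarrow>\<^sub>L real. blinfun_apply f x \<in> {a<..<b}} | x a b. True})
      \<subseteq> \<Union> {{f::'a \<Rightarrow>\<^sub>L real. blinfun_apply f x \<in> {a<..<b}} | x a b. True}"
      using ws_top[where 'a='a] unfolding weak_star_topology_def topology_generated_by_topspace by simp
  qed
  then have "openin weak_star_topology {f \<in> topspace weak_star_topology. c *\<^sub>R f \<in> U}"
    using openin_continuous_map_preimage assms by blast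
  then show ?thesis using ws_top[where 'a='a] by (simp add: vimage_def)
qed

lemma ws_cover:
  fixes f :: "'a::real_normed_vector \<Rightarrow>\<^sub>L real"
  shows "\<exists>n. \<exists>b\<in>dual_ball. f = real (Suc n) *\<^sub>R b"
proof -
  define n where "n = nat \<lceil>norm f\<rceil>"
  have le: "norm f \<le> real (Suc n)" unfolding n_def by linarith
  define b where "b = (1 / real (Suc n)) *\<^sub>R f"
  have "norm b \<le> 1" unfolding b_def using le by (simp add: field_simps)
  moreover have "f = real (Suc n) *\<^sub>R b" unfolding b_def by simp
  ultimately show ?thesis unfolding dual_ball_def by blast
qed

lemma ws_inj: "inj (\<lambda>f::'a::real_normed_vector \<Rightarrow>\<^sub>L real. real (Suc n) *\<^sub>R f)"
  by (rule injI) simp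

lemma ws_discrete:
  assumes x0: "(x0::'a::real_normed_vector) \<noteq> 0"
  shows "\<exists>D. discrete_in (subtopology (weak_star_topology :: ('a \<Rightarrow>\<^sub>L real) topology) dual_ball) D \<and> infinite D"
proof -
  obtain f0 :: "'a \<Rightarrow>\<^sub>L real" where f0: "norm f0 \<le> 1" "blinfun_apply f0 x0 = norm x0"
    using exists_functional[OF x0] by blast
  define v where "v = norm x0"
  have v: "v > 0" using x0 v_def by simp
  define d where "d k = (1 / real (Suc k)) *\<^sub>R f0" for k
  have dv: "blinfun_apply (d k) x0 = v / real (Suc k)" for k unfolding d_def v_def using f0 by (simp add: scaleR_blinfun.rep_eq)
  have "inj d"
  proof (rule injI)
    fix k m assume "d k = d m"
    then have "v / real (Suc k) = v / real (Suc m)" using dv by metis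
    then show "k = m" using v by (simp add: field_simps)
  qed
  then have inf: "infinite (range d)" using finite_imageD by blast
  have DB: "range d \<subseteq> dual_ball" unfolding dual_ball_def d_def using f0
    by (auto simp: field_simps intro: order_trans[OF _ f0(1)])
  have "discrete_in (subtopology weak_star_topology dual_ball) (range d)"
    unfolding discrete_in_def
  proof (intro conjI ballI)
    show "range d \<subseteq> topspace (subtopology weak_star_topology dual_ball)" using DB ws_top[where 'a='a] by simp
  next
    fix y assume "y \<in> range d"
    then obtain k where k: "y = d k" by blast
    define U where "U = {f::'a \<Rightarrow>\<^sub>L real. blinfun_apply f x0 \<in> {v / real (k+2) <..< 2 * v / real (2*k+1)}}"
    have "openin weak_star_topology U" unfolding U_def by (rule ws_basic)
    moreover have "{y} = U \<inter> range d"
    proof -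
      have "d m \<in> U \<longleftrightarrow> m = k" for m
      proof -
        have "d m \<in> U \<longleftrightarrow> v / real (k+2) < v / real (Suc m) \<and> v / real (Suc m) < 2 * v / real (2*k+1)"
          unfolding U_def using dv by simp
        also have "\<dots> \<longleftrightarrow> real (Suc m) < real (k+2) \<and> real (2*k+1) < 2 * real (Suc m)"
          using frac_cmp[OF v, of "real (k+2)" "real (Suc m)" 1 1] frac_cmp[OF v, of "real (Suc m)" "real (2*k+1)" 1 2]
          by simp
        also have "\<dots> \<longleftrightarrow> m = k" by simp linarith
        finally show ?thesis .
      qed
      then show ?thesis using k by auto
    qed
    ultimately have "openin (subtopology weak_star_topology (range d)) {y}"
      unfolding openin_subtopology by blast
    then show "openin (subtopology (subtopology weak_star_topology dual_ball) (range d)) {y}"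
      using sub_sub_eq[OF DB] by simp
  qed
  then show ?thesis using inf by blast
qed

theorem mainTheorem1:
  fixes X :: "'a::banach itself"
  assumes "infinite_dimensional X"
  shows "(\<forall>K::'b set. spread_le (weak_star_topology :: ('a \<Rightarrow>\<^sub>L real) topology) K
              \<longleftrightarrow> spread_le (subtopology weak_star_topology (dual_ball :: ('a \<Rightarrow>\<^sub>L real) set)) K)
       \<and> (\<forall>K::'b set. hL_le (weak_star_topology :: ('a \<Rightarrow>\<^sub>L real) topology) K
              \<longleftrightarrow> hL_le (subtopology weak_star_topology (dual_ball :: ('a \<Rightarrow>\<^sub>L real) set)) K)
       \<and> (\<forall>K::'b set. hd_le (weak_star_topology :: ('a \<Rightarrow>\<^sub>L real) topology) K
              \<longleftrightarrow> hd_le (subtopology weak_star_topology (dual_ball :: ('a \<Rightarrow>\<^sub>L real) set)) K)"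
proof -
  obtain x0 :: 'a where x0: "x0 \<noteq> 0"
  proof (rule ccontr)
    assume "\<not> thesis"
    then have "\<forall>x::'a. x = 0" using that by blast
    then have "span ({}::'a set) = UNIV" by auto
    then show False using assms unfolding infinite_dimensional_def by blast
  qed
  define T where "T = (weak_star_topology :: ('a \<Rightarrow>\<^sub>L real) topology)"
  define B where "B = (dual_ball :: ('a \<Rightarrow>\<^sub>L real) set)"
  define h where "h n f = real (Suc n) *\<^sub>R f" for n and f :: "'a \<Rightarrow>\<^sub>L real"
  have top: "topspace T = UNIV" unfolding T_def by (rule ws_top)
  have hopen: "openin T (h n -` U)" if "openin T U" for n U
  proof -
    have "h n -` U = (\<lambda>f. real (Suc n) *\<^sub>R f) -` U" unfolding h_def by simp
    then show ?thesis using ws_scale_open that unfolding T_def by metis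
  qed
  have hinj: "inj (h n)" for n unfolding h_def using ws_inj by (simp add: inj_def)
  have cov: "\<exists>n. \<exists>b\<in>B. x = h n b" for x unfolding h_def B_def by (rule ws_cover)
  obtain D where D: "discrete_in (subtopology T B) D" "infinite D"
    using ws_discrete[OF x0] unfolding T_def B_def by blast
  have P1: "spread_le T K \<longleftrightarrow> spread_le (subtopology T B) K" for K :: "'b set"
  proof (cases "finite K")
    case True then show ?thesis using finite_fail[OF D True] mono_spread by blast
  next
    case False then show ?thesis using mono_spread red_spread[OF top hopen hinj cov False] by blast
  qed
  have P2: "hL_le T K \<longleftrightarrow> hL_le (subtopology T B) K" for K :: "'b set"
  proof (cases "finite K")
    case True then show ?thesis using finite_fail[OF D True] mono_hL by blast
  next
    case False then show ?thesis using mono_hL red_hL[OF top hopen cov False] by blast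
  qed
  have P3: "hd_le T K \<longleftrightarrow> hd_le (subtopology T B) K" for K :: "'b set"
  proof (cases "finite K")
    case True then show ?thesis using finite_fail[OF D True] mono_hd by blast
  next
    case False then show ?thesis using mono_hd red_hd[OF top hopen cov False] by blast
  qed
  show ?thesis using P1 P2 P3 unfolding T_def B_def by blast
qed


end
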